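(* Let $b\in\mathbb{N}\setminus\{1\}$, $\xi_m\in\{-1,+1\}$ ($m\in\mathbb{Z}_+$) arbitrary, $\phi:\mathbb{R}\to\mathbb{R}$ periodic with period $1$, vanishing on $\mathbb{Z}$, and H\"older continuous with exponent $\gamma\in(0,1]$, and $\psi:(0,\infty)\to(0,\infty)$ submultiplicative with $\psi(b^{-1})\in(0,1)$. Let $f(t)=\sum_{m=0}^\infty \xi_m\psi(b^{-m})\phi(b^mt)$, $t\in[0,1]$, let $\Pi_n:=\{kb^{-n}:k=0,1,\dots,b^n\}$, $n\in\mathbb{N}$, and let $p\ge1$. (i) If $\psi(b^{-1})<b^{-\gamma}$, then $\limsup_{n\to\infty}\frac{RV^p_n(f,\Pi_n)}{b^{p(1-\gamma)n}}<\infty$. (ii) If $\psi(b^{-1})=b^{-\gamma}$, then $\limsup_{n\to\infty}\frac{RV^p_n(f,\Pi_n)}{n^pb^{p(1-\gamma)n}}<\infty$. (iii) If $\psi(b^{-1})>b^{-\gamma}$, then $\limsup_{n\to\infty}\frac{RV^p_n(f,\Pi_n)}{b^{p(1-\beta)n}}<\infty$, where $\beta:=-\log_b(\psi(b^{-1}))\in(0,\gamma)$.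
   Context: $\psi$ submultiplicative: $\psi(xy)\le\psi(x)\psi(y)$ for $x,y>0$. For $g:[0,1]\to\mathbb{R}$, $p\ge1$ and a partition $\mathcal{P}=\{0=t_0<t_1<\dots<t_N=1\}$ of $[0,1]$, the $p^{\mathrm{th}}$-order Riesz variation is $RV^p(g,\mathcal{P}):=\sum_{k=0}^{N-1}\frac{|g(t_{k+1})-g(t_k)|^p}{(t_{k+1}-t_k)^{p-1}}$; for the $b$-adic partition this is $RV^p_n(g,\Pi_n)=b^{n(p-1)}\sum_{k=0}^{b^n-1}|g((k+1)b^{-n})-g(kb^{-n})|^p$. *)

theory Defs
  imports "HOL-Analysis.Analysis"
begin

definition riesz_var_badic :: "nat \<Rightarrow> real \<Rightarrow> (real \<Rightarrow> real) \<Rightarrow> nat \<Rightarrow> real" where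
  "riesz_var_badic b p g n =
     real b powr (real n * (p - 1)) *
     (\<Sum>k<b ^ n. \<bar>g (real (k + 1) / real b ^ n) - g (real k / real b ^ n)\<bar> powr p)"

definition submultiplicative :: "(real \<Rightarrow> real) \<Rightarrow> bool" where
  "submultiplicative \<psi> \<longleftrightarrow> (\<forall>x>0. \<forall>y>0. \<psi> (x * y) \<le> \<psi> x * \<psi> y)"

end

theory Submission
  imports Defs
begin

lemma limsup_lt_inf: assumes "\<And>n. x n \<le> B" shows "limsup (\<lambda>n. ereal (x n)) < \<infinity>"
proof -
  have "limsup (\<lambda>n. ereal (x n)) \<le> ereal B"
    by (rule Limsup_bounded) (use assms in auto)
  moreover have "ereal B < \<infinity>" by simp
  ultimately show ?thesis by (rule le_less_trans)
qed

lemma ratio_bd: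
  fixes R F d p :: real
  assumes "R \<le> F powr p" "F \<ge> 0" "d \<ge> 0"
  shows "R / d powr p \<le> (F / d) powr p"
proof -
  have "R / d powr p \<le> F powr p / d powr p"
    using assms by (intro divide_right_mono) auto
  also have "\<dots> = (F / d) powr p" using assms by (simp add: powr_divide)
  finally show ?thesis .
qed

lemma geo_sum: "(x::real) \<noteq> 1 \<Longrightarrow> (\<Sum>i<n. x ^ i) = (x ^ n - 1) / (x - 1)"
  by (rule geometric_sum)



theorem theorem4p2:
  fixes b :: nat and \<xi> :: "nat \<Rightarrow> real" and \<phi> \<psi> :: "real \<Rightarrow> real"
    and \<gamma> p :: real and f :: "real \<Rightarrow> real"
  assumes b: "b \<ge> 2"
    and xi: "\<And>m. \<xi> m \<in> {-1, 1}"
    and phi_per: "\<And>x. \<phi> (x + 1) = \<phi> x"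
    and phi_int: "\<And>k::int. \<phi> (of_int k) = 0"
    and gamma: "0 < \<gamma>" "\<gamma> \<le> 1"
    and phi_hoelder: "\<exists>C. \<forall>x y. \<bar>\<phi> x - \<phi> y\<bar> \<le> C * \<bar>x - y\<bar> powr \<gamma>"
    and psi_pos: "\<And>x. x > 0 \<Longrightarrow> \<psi> x > 0"
    and psi_sub: "submultiplicative \<psi>"
    and psi_b: "\<psi> (1 / real b) < 1"
    and f_def: "\<And>t. f t = (\<Sum>m. \<xi> m * \<psi> (1 / real b ^ m) * \<phi> (real b ^ m * t))"
    and p: "p \<ge> 1"
  shows
    "(\<psi> (1 / real b) < real b powr (-\<gamma>) \<longrightarrow>
       limsup (\<lambda>n. ereal (riesz_var_badic b p f n / real b powr (p * (1 - \<gamma>) * real n)))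
         < \<infinity>) \<and>
     (\<psi> (1 / real b) = real b powr (-\<gamma>) \<longrightarrow>
       limsup (\<lambda>n. ereal (riesz_var_badic b p f n /
                  (real n powr p * real b powr (p * (1 - \<gamma>) * real n)))) < \<infinity>) \<and>
     (\<psi> (1 / real b) > real b powr (-\<gamma>) \<longrightarrow>
       (let \<beta> = - log (real b) (\<psi> (1 / real b)) in
        limsup (\<lambda>n. ereal (riesz_var_badic b p f n / real b powr (p * (1 - \<beta>) * real n)))
          < \<infinity>))"
  
proof -
  define B where "B = real b"
  have B1: "B > 1" using b by (simp add: B_def)
  obtain C where hC: "\<And>x y. \<bar>\<phi> x - \<phi> y\<bar> \<le> C * \<bar>x - y\<bar> powr \<gamma>"
    using phi_hoelder by blast
  have phi0: "\<phi> 0 = 0" using phi_int[of 0] by simp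
  have phi1: "\<phi> 1 = 0" using phi_int[of 1] by simp
  have C0: "C \<ge> 0" using hC[of 0 1] phi0 phi1 by simp
  have phi_nat: "\<phi> (real N) = 0" for N :: nat using phi_int[of "int N"] by simp
  have phi_bd: "\<bar>\<phi> x\<bar> \<le> C" for x
  proof -
    have "\<bar>\<phi> x\<bar> = \<bar>\<phi> x - \<phi> (of_int \<lfloor>x\<rfloor>)\<bar>" using phi_int by simp
    also have "\<dots> \<le> C * \<bar>x - of_int \<lfloor>x\<rfloor>\<bar> powr \<gamma>" by (rule hC)
    also have "\<dots> \<le> C * 1"
      apply (intro mult_left_mono powr_le1 C0)
      using gamma by (auto simp: floor_less_iff) linarith+
    finally show ?thesis by simp
  qed
  define a where "a = \<psi> (1 / B)"
  have a0: "a > 0" using psi_pos B1 by (simp add: a_def)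
  have a1: "a < 1" using psi_b by (simp add: a_def B_def)
  define M where "M = max 1 (\<psi> 1)"
  have M1: "M \<ge> 1" by (simp add: M_def)
  have psi_bd: "\<psi> (1 / B ^ m) \<le> M * a ^ m" for m
  proof (induction m)
    case 0 then show ?case by (simp add: M_def)
  next
    case (Suc m)
    have "\<psi> (1 / B ^ Suc m) = \<psi> ((1 / B ^ m) * (1 / B))" by (simp add: mult.commute)
    also have "\<dots> \<le> \<psi> (1 / B ^ m) * \<psi> (1 / B)"
    proof -
      have "1 / B ^ m > 0" "1 / B > 0" using B1 by auto
      then show ?thesis using psi_sub unfolding submultiplicative_def by blast
    qed
    also have "\<dots> \<le> M * a ^ m * a"
      using Suc a0 unfolding a_def by (intro mult_right_mono) auto
    finally show ?case by (simp add: mult_ac)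
  qed
  have coef: "\<bar>\<xi> m * \<psi> (1 / B ^ m)\<bar> \<le> M * a ^ m" for m
  proof -
    have "\<bar>\<xi> m\<bar> = 1" using xi[of m] by auto
    moreover have "\<psi> (1 / B ^ m) > 0" using psi_pos B1 by simp
    ultimately show ?thesis using psi_bd[of m] by (simp add: abs_mult)
  qed
  define g where "g m t = \<xi> m * \<psi> (1 / B ^ m) * \<phi> (B ^ m * t)" for m t
  have summ: "summable (\<lambda>m. g m t)" for t
  proof (rule summable_comparison_test)
    show "\<exists>N. \<forall>n\<ge>N. norm (g n t) \<le> C * M * a ^ n"
    proof (intro exI allI impI)
      fix n
      have "\<bar>g n t\<bar> = \<bar>\<xi> n * \<psi> (1 / B ^ n)\<bar> * \<bar>\<phi> (B ^ n * t)\<bar>"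
        by (simp add: g_def abs_mult)
      also have "\<dots> \<le> (M * a ^ n) * C"
        by (intro mult_mono coef phi_bd) (use M1 a0 in auto)
      finally show "norm (g n t) \<le> C * M * a ^ n" by (simp add: mult_ac)
    qed
    show "summable (\<lambda>n. C * M * a ^ n)"
      using a0 a1 by (intro summable_mult summable_geometric) auto
  qed
  have fg: "f t = (\<Sum>m. g m t)" for t using f_def by (simp add: g_def B_def)
  define E where "E n = C * M * (\<Sum>m<n. a ^ m * B powr ((real m - real n) * \<gamma>))" for n
  have key: "\<bar>f (real (k + 1) / real b ^ n) - f (real k / real b ^ n)\<bar> \<le> E n" for n k
  proof -
    define x where "x = real (k + 1) / B ^ n"
    define y where "y = real k / B ^ n"
    have "f x - f y = (\<Sum>m. g m x - g m y)"
      using fg summ by (simp add: suminf_diff)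
    also have "\<dots> = (\<Sum>m<n. g m x - g m y)"
    proof (rule suminf_finite)
      fix m assume "m \<notin> {..<n}"
      then have mn: "m \<ge> n" by simp
      have BB: "B ^ m / B ^ n = B ^ (m - n)" using B1 mn by (simp add: power_diff)
      have "B ^ m * x = real (k+1) * (B ^ m / B ^ n)" by (simp add: x_def)
      also have "\<dots> = real ((k+1) * b ^ (m - n))" unfolding BB by (simp add: B_def algebra_simps)
      finally have X: "B ^ m * x = real ((k+1) * b ^ (m - n))" .
      have "B ^ m * y = real k * (B ^ m / B ^ n)" by (simp add: y_def)
      also have "\<dots> = real (k * b ^ (m - n))" unfolding BB by (simp add: B_def algebra_simps)
      finally have Y: "B ^ m * y = real (k * b ^ (m - n))" .
      show "g m x - g m y = 0"
        unfolding g_def X Y phi_nat by simp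
    qed simp
    finally have "\<bar>f x - f y\<bar> \<le> (\<Sum>m<n. \<bar>g m x - g m y\<bar>)"
      by (simp add: sum_abs)
    also have "\<dots> \<le> (\<Sum>m<n. C * M * (a ^ m * B powr ((real m - real n) * \<gamma>)))"
    proof (rule sum_mono)
      fix m assume "m \<in> {..<n}"
      have d: "\<bar>B ^ m * x - B ^ m * y\<bar> = B powr (real m - real n)"
        using B1 by (simp add: x_def y_def powr_diff powr_realpow field_simps)
      have "\<bar>g m x - g m y\<bar> = \<bar>\<xi> m * \<psi> (1 / B ^ m)\<bar> * \<bar>\<phi> (B ^ m * x) - \<phi> (B ^ m * y)\<bar>"
        by (simp add: g_def abs_mult right_diff_distrib[symmetric])
      also have "\<dots> \<le> (M * a ^ m) * (C * \<bar>B ^ m * x - B ^ m * y\<bar> powr \<gamma>)"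
        by (intro mult_mono coef hC) (use C0 M1 a0 in auto)
      also have "\<dots> = C * M * (a ^ m * B powr ((real m - real n) * \<gamma>))"
        using B1 by (simp add: d powr_powr)
      finally show "\<bar>g m x - g m y\<bar> \<le> C * M * (a ^ m * B powr ((real m - real n) * \<gamma>))" .
    qed
    also have "\<dots> = E n" by (simp add: E_def sum_distrib_left)
    finally show ?thesis by (simp add: x_def y_def B_def)
  qed
  define q where "q = a * B powr \<gamma>"
  have q0: "q > 0" using a0 B1 by (simp add: q_def)
  define S where "S n = (\<Sum>m<n. q ^ m)" for n
  have S0: "S n \<ge> 0" for n using q0 by (simp add: S_def sum_nonneg)
  have ES: "E n = C * M * B powr (- real n * \<gamma>) * S n" for n
  proof -
    have "a ^ m * B powr ((real m - real n) * \<gamma>) = B powr (- real n * \<gamma>) * q ^ m" for m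
    proof -
      have "B powr ((real m - real n) * \<gamma>) = B powr (- real n * \<gamma>) * (B powr \<gamma>) ^ m"
      proof -
        have "(B powr \<gamma>) ^ m = (B powr \<gamma>) powr real m" using B1 by (simp add: powr_realpow)
        also have "\<dots> = B powr (\<gamma> * real m)" by (simp add: powr_powr)
        finally have e: "(B powr \<gamma>) ^ m = B powr (\<gamma> * real m)" .
        have "B powr ((real m - real n) * \<gamma>) = B powr (- real n * \<gamma> + \<gamma> * real m)"
          by (simp add: algebra_simps)
        also have "\<dots> = B powr (- real n * \<gamma>) * B powr (\<gamma> * real m)" by (rule powr_add)
        finally show ?thesis by (simp add: e)
      qed
      then show ?thesis by (simp add: q_def power_mult_distrib)
    qed
    then show ?thesis by (simp add: E_def S_def sum_distrib_left sum_distrib_right mult_ac)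
  qed
  define F where "F n = B ^ n * E n" for n
  have FS: "F n = C * M * B powr ((1 - \<gamma>) * real n) * S n" for n
  proof -
    have "B ^ n * B powr (- real n * \<gamma>) = B powr ((1 - \<gamma>) * real n)"
      using B1 by (simp add: powr_realpow[symmetric] powr_add[symmetric] algebra_simps)
    then show ?thesis unfolding F_def ES by (simp add: mult_ac)
  qed
  have F0: "F n \<ge> 0" for n unfolding FS using C0 M1 S0 by simp
  have RV: "riesz_var_badic b p f n \<le> F n powr p" for n
  proof -
    have Bn: "B ^ n > 0" using B1 by simp
    have E0: "E n \<ge> 0" using F0[of n] Bn unfolding F_def by (metis not_le zero_le_mult_iff)
    have "riesz_var_badic b p f n \<le> B powr (real n * (p - 1)) * (of_nat (card {..<b ^ n}) * E n powr p)"
      unfolding riesz_var_badic_def B_def[symmetric]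
      apply (intro mult_left_mono sum_bounded_above powr_mono2)
      using key p E0 by (auto simp: B_def)
    also have "\<dots> = B powr (real n * (p - 1)) * B powr real n * E n powr p"
      using B1 by (simp add: B_def powr_realpow)
    also have "\<dots> = (B ^ n * E n) powr p"
      using B1 E0 by (simp add: powr_mult powr_add[symmetric] powr_powr powr_realpow[symmetric]
          algebra_simps)
    finally show ?thesis by (simp add: F_def)
  qed
  have Bg: "B powr (- \<gamma>) * B powr \<gamma> = 1" using B1 by (simp add: powr_add[symmetric])
  have Bgp: "B powr \<gamma> > 0" using B1 by simp
  have den: "real b powr (p * (1 - c) * real n) = (B powr ((1 - c) * real n)) powr p" for c n
    by (simp add: B_def powr_powr mult_ac)
  have Sgeo: "q \<noteq> 1 \<Longrightarrow> S n = (q ^ n - 1) / (q - 1)" for n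
    unfolding S_def by (rule geometric_sum)
  have Bpos: "B powr x > 0" for x using B1 by simp
  show ?thesis
  proof (intro conjI impI)
    assume h: "\<psi> (1 / real b) < real b powr (-\<gamma>)"
    have "q < B powr (- \<gamma>) * B powr \<gamma>"
      unfolding q_def using h Bgp by (intro mult_strict_right_mono) (auto simp: a_def B_def)
    then have qlt: "q < 1" using Bg by simp
    show "limsup (\<lambda>n. ereal (riesz_var_badic b p f n / real b powr (p * (1 - \<gamma>) * real n))) < \<infinity>"
    proof (rule limsup_lt_inf)
      fix n
      have r: "F n / B powr ((1 - \<gamma>) * real n) = C * M * S n" using FS Bpos[of "(1 - \<gamma>) * real n"] by simp
      have "S n = (1 - q ^ n) / (1 - q)" using Sgeo[of n] qlt by (simp add: divide_simps) (simp add: algebra_simps)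
      also have "\<dots> \<le> 1 / (1 - q)" using qlt q0 by (intro divide_right_mono) auto
      finally have Sb: "S n \<le> 1 / (1 - q)" .
      have "riesz_var_badic b p f n / real b powr (p * (1 - \<gamma>) * real n)
          \<le> (F n / B powr ((1 - \<gamma>) * real n)) powr p"
        unfolding den by (rule ratio_bd[OF RV F0]) (simp add: less_imp_le Bpos)
      also have "\<dots> \<le> (C * M * (1 / (1 - q))) powr p"
        unfolding r using p C0 M1 S0 Sb by (intro powr_mono2 mult_left_mono) auto
      finally show "riesz_var_badic b p f n / real b powr (p * (1 - \<gamma>) * real n)
          \<le> (C * M * (1 / (1 - q))) powr p" .
    qed
  next
    assume h: "\<psi> (1 / real b) = real b powr (-\<gamma>)"
    have q1: "q = 1" unfolding q_def using h Bg by (simp add: a_def B_def)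
    have Sn: "S n = real n" for n by (simp add: S_def q1)
    show "limsup (\<lambda>n. ereal (riesz_var_badic b p f n /
                  (real n powr p * real b powr (p * (1 - \<gamma>) * real n)))) < \<infinity>"
    proof (rule limsup_lt_inf)
      fix n
      have d2: "real n powr p * real b powr (p * (1 - \<gamma>) * real n)
          = (real n * B powr ((1 - \<gamma>) * real n)) powr p"
        unfolding den by (simp add: powr_mult)
      have r: "F n / (real n * B powr ((1 - \<gamma>) * real n)) \<le> C * M"
      proof (cases "n = 0")
        case True then show ?thesis using C0 M1 by simp
      next
        case False
        then have "F n / (real n * B powr ((1 - \<gamma>) * real n)) = C * M"
          using FS Sn Bpos[of "(1 - \<gamma>) * real n"] by simp
        then show ?thesis by simp
      qed
      have "riesz_var_badic b p f n / (real n powr p * real b powr (p * (1 - \<gamma>) * real n))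
          \<le> (F n / (real n * B powr ((1 - \<gamma>) * real n))) powr p"
        unfolding d2 by (rule ratio_bd[OF RV F0]) (simp add: less_imp_le Bpos)
      also have "\<dots> \<le> (C * M) powr p"
        using r p F0 Bpos[of "(1 - \<gamma>) * real n"] by (intro powr_mono2) auto
      finally show "riesz_var_badic b p f n / (real n powr p * real b powr (p * (1 - \<gamma>) * real n))
          \<le> (C * M) powr p" .
    qed
  next
    assume h: "\<psi> (1 / real b) > real b powr (-\<gamma>)"
    have "q > B powr (- \<gamma>) * B powr \<gamma>"
      unfolding q_def using h Bgp by (intro mult_strict_right_mono) (auto simp: a_def B_def)
    then have qgt: "q > 1" using Bg by simp
    define \<beta> where "\<beta> = - log (real b) (\<psi> (1 / real b))"
    have Bb: "B powr (- \<beta>) = a" using B1 a0 by (simp add: \<beta>_def a_def B_def)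
    show "let \<beta> = - log (real b) (\<psi> (1 / real b)) in
        limsup (\<lambda>n. ereal (riesz_var_badic b p f n / real b powr (p * (1 - \<beta>) * real n))) < \<infinity>"
      unfolding Let_def \<beta>_def[symmetric]
    proof (rule limsup_lt_inf)
      fix n
      have d3: "B powr ((1 - \<beta>) * real n) = B ^ n * a ^ n"
      proof -
        have "B powr ((1 - \<beta>) * real n) = B powr real n * (B powr (- \<beta>)) powr real n"
          by (simp add: powr_powr powr_add[symmetric] algebra_simps)
        also have "\<dots> = B ^ n * a ^ n" using B1 a0 by (simp add: Bb powr_realpow)
        finally show ?thesis .
      qed
      define t where "t = B powr (- real n * \<gamma>)"
      have t0: "t > 0" using B1 by (simp add: t_def)
      have tq: "t * q ^ n = a ^ n"
      proof -
        have "(B powr \<gamma>) ^ n = B powr (\<gamma> * real n)"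
          using B1 by (simp add: powr_realpow[symmetric] powr_powr)
        then have "t * (B powr \<gamma>) ^ n = 1" unfolding t_def using B1 by (simp add: powr_add[symmetric])
        then show ?thesis by (simp add: q_def power_mult_distrib mult_ac)
      qed
      have qn: "q ^ n > 0" using q0 by simp
      have r: "F n / (B ^ n * a ^ n) = C * M * (S n / q ^ n)"
        unfolding F_def ES t_def[symmetric] tq[symmetric] using t0 qn B1 by (simp add: field_simps)
      have "S n = (q ^ n - 1) / (q - 1)" using Sgeo[of n] qgt by simp
      also have "\<dots> \<le> q ^ n / (q - 1)" using qgt by (intro divide_right_mono) auto
      finally have "S n \<le> q ^ n / (q - 1)" .
      then have Sb: "S n / q ^ n \<le> 1 / (q - 1)" using qn by (simp add: divide_simps mult.commute)
      have "riesz_var_badic b p f n / real b powr (p * (1 - \<beta>) * real n)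
          \<le> (F n / (B ^ n * a ^ n)) powr p"
        unfolding den d3[symmetric] by (rule ratio_bd[OF RV F0]) (simp add: less_imp_le Bpos)
      also have "\<dots> \<le> (C * M * (1 / (q - 1))) powr p"
        unfolding r using p C0 M1 S0 Sb qn by (intro powr_mono2 mult_left_mono) auto
      finally show "riesz_var_badic b p f n / real b powr (p * (1 - \<beta>) * real n)
          \<le> (C * M * (1 / (q - 1))) powr p" .
    qed
  qed
qed

end
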